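(* In the real projective plane, let $g_1,g_2$ be distinct lines and $C_1,C_2$ distinct points, and suppose the coordinate system is such that $g_1$ and $g_2$ meet on the line at infinity (they are parallel lines in the affine plane), $C_2$ lies on the line at infinity, and $C_1$ is an affine point. Suppose that the distances from $C_1$ to $g_1$ and to $g_2$ are not equal. Then the polygonal lines inscribed in $g_1\cup g_2$ and circumscribed about the singular dual conic given by $C_1,C_2$ satisfy: (i) the only finite such polygonal line consists of a single segment, determined by the intersection points of $g_1$ and $g_2$ with the line $C_1C_2$; (ii) all other such polygonal lines are not closed; moreover, their sides approach the line $C_1C_2$ in one direction and diverge to infinity in the other direction.
   Context: The singular dual conic given by $C_1,C_2$ is the union of the pencils of lines through $C_1$ and through $C_2$ (lines through $C_2$ are lines parallel to a fixed direction). A polygonal line is inscribed in $g_1\cup g_2$ and circumscribed about this dual conic if its vertices lie alternately on $g_1$ and $g_2$ and its side lines pass alternately through $C_1$ and $C_2$; it is closed if its vertex sequence is periodic. *)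

theory Defs
  imports "HOL-Analysis.Analysis"
begin

text \<open>Affine model of the real projective plane: points are vectors in real^2.
  The point C1 is an affine point c; the point C2 at infinity is given by a
  nonzero direction vector d (lines through C2 = lines parallel to d).\<close>

definition int_interval :: "int set \<Rightarrow> bool" where
  "int_interval I \<longleftrightarrow> I \<noteq> {} \<and> (\<forall>i\<in>I. \<forall>k\<in>I. \<forall>j. i \<le> j \<and> j \<le> k \<longrightarrow> j \<in> I)"

text \<open>A polygonal line inscribed in g1 \<union> g2 and circumscribed about the singular
  dual conic {C1, C2}: vertices v i (i in an integer interval I) lie alternately
  on g1 and g2, side lines pass alternately through C1 and C2, and consecutive
  side lines are distinct (no backtracking).\<close>

definition polyline ::
  "(real^2) set \<Rightarrow> (real^2) set \<Rightarrow> real^2 \<Rightarrow> real^2 \<Rightarrow> int set \<Rightarrow> (int \<Rightarrow> real^2) \<Rightarrow> bool" where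
  "polyline g1 g2 c d I v \<longleftrightarrow>
     int_interval I \<and>
     (\<exists>s t :: int.
        (\<forall>i\<in>I. v i \<in> (if even (i + t) then g1 else g2)) \<and>
        (\<forall>i. i \<in> I \<and> i + 1 \<in> I \<longrightarrow>
              (if even (i + s) then collinear {c, v i, v (i + 1)}
               else (\<exists>r. v (i + 1) - v i = r *\<^sub>R d)))) \<and>
     (\<forall>i. i \<in> I \<and> i + 2 \<in> I \<longrightarrow> v (i + 2) \<noteq> v i)"

definition max_polyline ::
  "(real^2) set \<Rightarrow> (real^2) set \<Rightarrow> real^2 \<Rightarrow> real^2 \<Rightarrow> int set \<Rightarrow> (int \<Rightarrow> real^2) \<Rightarrow> bool" where
  "max_polyline g1 g2 c d I v \<longleftrightarrow>
     polyline g1 g2 c d I v \<and>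
     \<not> (\<exists>J w. polyline g1 g2 c d J w \<and> I \<subset> J \<and> (\<forall>i\<in>I. w i = v i))"

end

theory Submission
  imports Defs
begin


lemma infdist_hyper:
  fixes a c :: "real^2"
  assumes "a \<noteq> 0"
  shows "infdist c {x. a \<bullet> x = b} = \<bar>a \<bullet> c - b\<bar> / norm a"
proof -
  define p where "p = c - ((a \<bullet> c - b) / (a \<bullet> a)) *\<^sub>R a"
  have na: "norm a > 0" using assms by simp
  have aa: "a \<bullet> a = norm a * norm a" by (metis norm_eq_sqrt_inner real_sqrt_mult_self inner_ge_zero abs_of_nonneg real_sqrt_abs2 power2_eq_square)
  have aa0: "a \<bullet> a \<noteq> 0" using assms by simp
  have pin: "p \<in> {x. a \<bullet> x = b}" using aa0 by (simp add: p_def inner_diff_right)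
  have "dist c p = norm (((a \<bullet> c - b) / (a \<bullet> a)) *\<^sub>R a)" by (simp add: p_def dist_norm)
  also have "\<dots> = \<bar>a \<bullet> c - b\<bar> / (a \<bullet> a) * norm a" by (simp add: aa)
  also have "\<dots> = \<bar>a \<bullet> c - b\<bar> / norm a" using na by (simp add: aa)
  finally have "dist c p = \<bar>a \<bullet> c - b\<bar> / norm a" .
  hence le: "infdist c {x. a \<bullet> x = b} \<le> \<bar>a \<bullet> c - b\<bar> / norm a"
    using infdist_le[OF pin, of c] by simp
  have ge: "\<bar>a \<bullet> c - b\<bar> / norm a \<le> infdist c {x. a \<bullet> x = b}"
  proof -
    have ne: "{x. a \<bullet> x = b} \<noteq> {}" using pin by blast
    have "\<bar>a \<bullet> c - b\<bar> / norm a \<le> (INF y\<in>{x. a \<bullet> x = b}. dist c y)"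
    proof (rule cINF_greatest[OF ne])
      fix y assume "y \<in> {x. a \<bullet> x = b}"
      hence "a \<bullet> c - b = a \<bullet> (c - y)" by (simp add: inner_diff_right)
      also have "\<bar>\<dots>\<bar> \<le> norm a * norm (c - y)" by (rule Cauchy_Schwarz_ineq2)
      finally show "\<bar>a \<bullet> c - b\<bar> / norm a \<le> dist c y"
        using na by (simp add: dist_norm divide_le_eq mult.commute)
    qed
    thus ?thesis using infdist_notempty[OF ne] by simp
  qed
  show ?thesis using le ge by simp
qed




locale lsetup =
  fixes a c d :: "real^2" and b1 b2 :: real
  assumes ad: "a \<bullet> d \<noteq> 0" and b12: "b1 \<noteq> b2"
    and c1: "a \<bullet> c \<noteq> b1" and c2: "a \<bullet> c \<noteq> b2"
    and absne: "\<bar>b1 - a \<bullet> c\<bar> \<noteq> \<bar>b2 - a \<bullet> c\<bar>"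
begin

definition alpha :: "real^2 \<Rightarrow> real" where "alpha x = (a \<bullet> x - a \<bullet> c) / (a \<bullet> d)"
definition W :: "real^2 \<Rightarrow> real^2" where "W x = x - c - alpha x *\<^sub>R d"
definition A1 :: real where "A1 = (b1 - a \<bullet> c) / (a \<bullet> d)"
definition A2 :: real where "A2 = (b2 - a \<bullet> c) / (a \<bullet> d)"
definition kap :: "int \<Rightarrow> int \<Rightarrow> real" where
  "kap s t = (if even (s + t) then A2 / A1 else A1 / A2)"
definition Al :: "int \<Rightarrow> real" where "Al j = (if even j then A1 else A2)"
definition G :: "int \<Rightarrow> (real^2) set" where
  "G j = (if even j then {x. a \<bullet> x = b1} else {x. a \<bullet> x = b2})"

definition prep :: "int set \<Rightarrow> (int \<Rightarrow> real^2) \<Rightarrow> int \<Rightarrow> int \<Rightarrow> bool" where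
  "prep I v s t \<longleftrightarrow>
        (\<forall>i\<in>I. v i \<in> (if even (i + t) then {x. a \<bullet> x = b1} else {x. a \<bullet> x = b2})) \<and>
        (\<forall>i. i \<in> I \<and> i + 1 \<in> I \<longrightarrow>
              (if even (i + s) then collinear {c, v i, v (i + 1)}
               else (\<exists>r. v (i + 1) - v i = r *\<^sub>R d)))"

abbreviation "PL \<equiv> polyline {x. a \<bullet> x = b1} {x. a \<bullet> x = b2} c d"
abbreviation "MPL \<equiv> max_polyline {x. a \<bullet> x = b1} {x. a \<bullet> x = b2} c d"

lemma poly_iff: "PL I v \<longleftrightarrow> int_interval I \<and> (\<exists>s t. prep I v s t) \<and>
    (\<forall>i. i \<in> I \<and> i + 2 \<in> I \<longrightarrow> v (i + 2) \<noteq> v i)"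
  by (simp add: polyline_def prep_def)

lemma A_nz: "A1 \<noteq> 0" "A2 \<noteq> 0" "A1 \<noteq> A2"
  using ad c1 c2 b12 by (auto simp: A1_def A2_def divide_cancel_right)

lemma absA: "\<bar>A1\<bar> \<noteq> \<bar>A2\<bar>"
  using absne ad by (auto simp: A1_def A2_def abs_divide divide_cancel_right)

lemma Al_nz: "Al j \<noteq> 0" using A_nz by (simp add: Al_def)

lemma Al_cases: "Al j = A1 \<or> Al j = A2" by (simp add: Al_def)

lemma Al_pair: "{Al j, Al (j + 1)} = {A1, A2}" by (auto simp: Al_def)

lemma Al2: "Al (j + 2) = Al j" by (simp add: Al_def)

lemma mem_G: "x \<in> G j \<longleftrightarrow> alpha x = Al j"
  using ad by (auto simp: G_def Al_def alpha_def A1_def A2_def divide_cancel_right)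

lemma alpha_c: "alpha c = 0" by (simp add: alpha_def)

lemma alpha_shift: "alpha (x + r *\<^sub>R d) = alpha x + r"
  using ad by (simp add: alpha_def inner_add_right field_simps)

lemma alpha_scale: "alpha (c + u *\<^sub>R (x - c)) = u * alpha x"
  by (simp add: alpha_def inner_add_right inner_diff_right algebra_simps)

lemma decomp: "x = c + alpha x *\<^sub>R d + W x" by (simp add: W_def)

lemma W_line: "W (c + r *\<^sub>R d) = 0"
  using alpha_shift[of c r] by (simp add: W_def alpha_c)

lemma eq_by_W: "alpha x = alpha y \<Longrightarrow> W x = W y \<Longrightarrow> x = y"
  by (metis decomp)

lemma side_col:
  assumes "alpha x \<noteq> 0" "collinear {c, x, y}"
  shows "W y = (alpha y / alpha x) *\<^sub>R W x"
proof -
  have "x \<noteq> c" using assms(1) alpha_c by auto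
  have "collinear {x, y, c}" using assms(2) by (simp add: insert_commute)
  then obtain u where y: "y = u *\<^sub>R x + (1 - u) *\<^sub>R c"
    using \<open>x \<noteq> c\<close> by (auto simp: collinear_3_expand)
  have y2: "y = c + u *\<^sub>R (x - c)" by (simp add: y algebra_simps)
  have ay: "alpha y = u * alpha x" unfolding y2 by (rule alpha_scale)
  have "W y = u *\<^sub>R W x" by (simp only: W_def ay) (simp add: y2 algebra_simps)
  thus ?thesis using ay assms(1) by simp
qed

lemma side_par: "y - x = r *\<^sub>R d \<Longrightarrow> W y = W x"
proof -
  assume "y - x = r *\<^sub>R d"
  hence y: "y = x + r *\<^sub>R d" by (simp add: algebra_simps)
  show ?thesis by (simp add: y W_def alpha_shift algebra_simps)
qed

lemma col_mk: "collinear {c, x, c + u *\<^sub>R (x - c)}"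
proof -
  have e: "c + u *\<^sub>R (x - c) = u *\<^sub>R x + (1 - u) *\<^sub>R c" by (simp add: algebra_simps)
  have "collinear {x, c + u *\<^sub>R (x - c), c}"
    unfolding collinear_3_expand using e by blast
  thus ?thesis by (simp add: insert_commute)
qed

lemma prep_alpha: "prep I v s t \<Longrightarrow> i \<in> I \<Longrightarrow> alpha (v i) = Al (i + t)"
  by (simp add: prep_def mem_G[symmetric] G_def)

lemma prep_side:
  assumes P: "prep I v s t" and i: "i \<in> I" "i + 1 \<in> I"
  shows "W (v (i + 1)) = (if even (i + s) then Al (i + 1 + t) / Al (i + t) else 1) *\<^sub>R W (v i)"
proof -
  have S: "if even (i + s) then collinear {c, v i, v (i + 1)} else (\<exists>r. v (i + 1) - v i = r *\<^sub>R d)"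
    using P i unfolding prep_def by blast
  show ?thesis
  proof (cases "even (i + s)")
    case True
    then have "collinear {c, v i, v (i + 1)}" using S by simp
    then show ?thesis using side_col[of "v i" "v (i + 1)"] True prep_alpha[OF P i(1)] prep_alpha[OF P i(2)] Al_nz
      by (simp add: add.assoc)
  next
    case False
    then obtain r where "v (i + 1) - v i = r *\<^sub>R d" using S by auto
    then show ?thesis using side_par False by simp
  qed
qed

lemma step:
  assumes P: "prep I v s t" and i: "i \<in> I" "i + 1 \<in> I" "i + 2 \<in> I"
  shows "W (v (i + 2)) = kap s t *\<^sub>R W (v i)"
proof -
  have h1: "W (v (i + 1)) = (if even (i + s) then Al (i + 1 + t) / Al (i + t) else 1) *\<^sub>R W (v i)"
    by (rule prep_side[OF P i(1,2)])
  have h2: "W (v (i + 1 + 1)) = (if even (i + 1 + s) then Al (i + 1 + 1 + t) / Al (i + 1 + t) else 1) *\<^sub>R W (v (i + 1))"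
    by (rule prep_side[OF P i(2)]) (simp add: i(3) add.assoc)
  have e: "i + 1 + 1 = i + 2" by simp
  have "(if even (i + 1 + s) then Al (i + 1 + 1 + t) / Al (i + 1 + t) else 1) *
        (if even (i + s) then Al (i + 1 + t) / Al (i + t) else 1) = kap s t"
    by (cases "even i"; cases "even s"; cases "even t") (auto simp: Al_def kap_def even_add)
  then show ?thesis using h1 h2 unfolding e by simp
qed

lemma kap_props: "kap s t \<noteq> 1" "kap s t \<noteq> 0" "\<bar>kap s t\<bar> \<noteq> 1"
proof -
  have h1: "A2 / A1 \<noteq> 1" "A1 / A2 \<noteq> 1" using A_nz by (simp_all add: divide_eq_1_iff)
  have h2: "A2 / A1 \<noteq> 0" "A1 / A2 \<noteq> 0" using A_nz by simp_all
  have h3: "\<bar>A2 / A1\<bar> \<noteq> 1" "\<bar>A1 / A2\<bar> \<noteq> 1" using A_nz absA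
    by (simp_all add: abs_divide divide_eq_1_iff)
  show "kap s t \<noteq> 1" "kap s t \<noteq> 0" "\<bar>kap s t\<bar> \<noteq> 1" using h1 h2 h3 by (simp_all add: kap_def)
qed

lemma adj:
  assumes P: "prep I v s t" and i: "i \<in> I" "i + 1 \<in> I" and nz: "W (v i) \<noteq> 0"
  shows "W (v (i + 1)) \<noteq> 0"
proof -
  have e: "W (v (i + 1)) = (if even (i + s) then Al (i + 1 + t) / Al (i + t) else 1) *\<^sub>R W (v i)"
    by (rule prep_side[OF P i])
  have "(if even (i + s) then Al (i + 1 + t) / Al (i + t) else 1) \<noteq> 0"
    using Al_nz[of "i + 1 + t"] Al_nz[of "i + t"] by simp
  then show ?thesis using e nz by simp
qed

lemma mem_uminus: "(x::int) \<in> uminus ` I \<longleftrightarrow> - x \<in> I"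
proof
  assume "x \<in> uminus ` I"
  then obtain y where "y \<in> I" "x = - y" by blast
  then show "- x \<in> I" by simp
next
  assume "- x \<in> I" then have "- (- x) \<in> uminus ` I" by (rule imageI)
  then show "x \<in> uminus ` I" by (simp only: minus_minus)
qed

lemma interval_mid: "int_interval I \<Longrightarrow> i \<in> I \<Longrightarrow> k \<in> I \<Longrightarrow> i \<le> j \<Longrightarrow> j \<le> k \<Longrightarrow> j \<in> I"
  unfolding int_interval_def by blast

lemma nonzero:
  assumes "PL I v" "i \<in> I" "i + 2 \<in> I"
  shows "W (v i) \<noteq> 0 \<and> W (v (i + 2)) \<noteq> 0"
proof -
  obtain s t where P: "prep I v s t" and iv: "int_interval I"
    and nb: "\<forall>i. i \<in> I \<and> i + 2 \<in> I \<longrightarrow> v (i + 2) \<noteq> v i"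
    using assms(1) by (auto simp: poly_iff)
  have i1: "i + 1 \<in> I" using interval_mid[OF iv assms(2,3), of "i + 1"] by simp
  have st: "W (v (i + 2)) = kap s t *\<^sub>R W (v i)" by (rule step[OF P assms(2) i1 assms(3)])
  have e: "Al (i + 2 + t) = Al (i + t)" by (simp add: Al_def even_add)
  have al: "alpha (v (i + 2)) = alpha (v i)"
    using prep_alpha[OF P assms(2)] prep_alpha[OF P assms(3)] e by simp
  have ne: "v (i + 2) \<noteq> v i" using nb assms by blast
  have z: "W (v i) \<noteq> 0"
  proof
    assume "W (v i) = 0"
    then have "W (v (i + 2)) = W (v i)" using st by simp
    then show False using eq_by_W[OF al] ne by simp
  qed
  moreover have "W (v (i + 2)) \<noteq> 0" using st z kap_props(2) by simp
  ultimately show ?thesis by simp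
qed

end



context lsetup begin

lemma ext:
  assumes PI: "PL I v" and hi: "hi \<in> I" "hi + 1 \<notin> I" and le: "\<forall>i\<in>I. i \<le> hi"
    and cnd: "hi - 1 \<notin> I \<or> W (v hi) \<noteq> 0"
  shows "\<exists>w. PL (insert (hi + 1) I) w \<and> (\<forall>i\<in>I. w i = v i)"
proof -
  obtain s t where P: "prep I v s t" and iv: "int_interval I"
    and nb: "\<forall>i. i \<in> I \<and> i + 2 \<in> I \<longrightarrow> v (i + 2) \<noteq> v i"
    using PI by (auto simp: poly_iff)
  define x where "x = v hi"
  define p where "p = (if even (hi + s) then c + (Al (hi + 1 + t) / Al (hi + t)) *\<^sub>R (x - c)
                       else x + (Al (hi + 1 + t) - Al (hi + t)) *\<^sub>R d)"
  have ax: "alpha x = Al (hi + t)" unfolding x_def by (rule prep_alpha[OF P hi(1)])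
  have ap: "alpha p = Al (hi + 1 + t)"
  proof (cases "even (hi + s)")
    case True
    then have "alpha p = (Al (hi + 1 + t) / Al (hi + t)) * alpha x"
      unfolding p_def by (simp only: if_True alpha_scale)
    then show ?thesis using ax Al_nz[of "hi + t"] by simp
  next
    case False
    then have "alpha p = alpha x + (Al (hi + 1 + t) - Al (hi + t))"
      unfolding p_def by (simp only: if_False alpha_shift)
    then show ?thesis using ax by simp
  qed
  define w where "w = v(hi + 1 := p)"
  define J where "J = insert (hi + 1) I"
  have wI: "\<And>i. i \<in> I \<Longrightarrow> w i = v i" using hi(2) by (auto simp: w_def)
  have wp: "w (hi + 1) = p" by (simp add: w_def)
  have notI: "\<And>j. j > hi \<Longrightarrow> j \<notin> I" using le by force
  have PJ: "prep J w s t"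
    unfolding prep_def
  proof (intro conjI allI ballI impI)
    fix i assume iJ: "i \<in> J"
    show "w i \<in> (if even (i + t) then {x. a \<bullet> x = b1} else {x. a \<bullet> x = b2})"
    proof (cases "i = hi + 1")
      case True
      have "p \<in> G (hi + 1 + t)" using ap by (simp add: mem_G)
      then show ?thesis using True wp by (simp add: G_def)
    next
      case False
      then have "i \<in> I" using iJ by (simp add: J_def)
      then show ?thesis using P wI by (simp add: prep_def)
    qed
  next
    fix i assume ii: "i \<in> J \<and> i + 1 \<in> J"
    show "if even (i + s) then collinear {c, w i, w (i + 1)} else \<exists>r. w (i + 1) - w i = r *\<^sub>R d"
    proof (cases "i = hi")
      case True
      have whi: "w hi = x" using wI hi(1) by (simp add: x_def)
      show ?thesis
      proof (cases "even (i + s)")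
        case True
        then show ?thesis using \<open>i = hi\<close> whi wp by (simp add: p_def col_mk)
      next
        case False
        then show ?thesis using \<open>i = hi\<close> whi wp by (auto simp: p_def)
      qed
    next
      case False
      have "i \<noteq> hi + 1"
      proof
        assume e: "i = hi + 1"
        then have "i + 1 \<noteq> hi + 1" by simp
        then have "i + 1 \<in> I" using ii by (simp add: J_def)
        moreover have "i + 1 > hi" using e by simp
        ultimately show False using notI by blast
      qed
      then have i1: "i \<in> I" "i + 1 \<in> I" using ii False by (auto simp: J_def)
      then show ?thesis using P wI by (simp add: prep_def)
    qed
  qed
  have nbJ: "\<forall>i. i \<in> J \<and> i + 2 \<in> J \<longrightarrow> w (i + 2) \<noteq> w i"
  proof (intro allI impI)
    fix i assume ii: "i \<in> J \<and> i + 2 \<in> J"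
    have ni: "i \<noteq> hi + 1"
    proof
      assume e: "i = hi + 1"
      then have "i + 2 \<noteq> hi + 1" by simp
      then have "i + 2 \<in> I" using ii by (simp add: J_def)
      moreover have "i + 2 > hi" using e by simp
      ultimately show False using notI by blast
    qed
    show "w (i + 2) \<noteq> w i"
    proof (cases "i + 2 = hi + 1")
      case True
      then have ieq: "i = hi - 1" by simp
      then have iI: "hi - 1 \<in> I" using ii ni by (auto simp: J_def)
      have Wx: "W (v hi) \<noteq> 0" using cnd iI by simp
      have hJ: "hi \<in> J" "hi + 1 \<in> J" "hi - 1 \<in> J" using hi(1) iI by (auto simp: J_def)
      have e1: "hi - 1 + 1 = hi" by simp
      have e2: "hi - 1 + 2 = hi + 1" by simp
      have hJ2: "hi - 1 + 1 \<in> J" "hi - 1 + 2 \<in> J" unfolding e1 e2 using hJ by blast+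
      have Wp: "W (w (hi + 1)) \<noteq> 0" using adj[OF PJ hJ(1,2)] Wx wI hi(1) by simp
      have st: "W (w (hi + 1)) = kap s t *\<^sub>R W (w (hi - 1))"
        using step[OF PJ hJ(3) hJ2] unfolding e2 .
      have neq: "w (hi + 1) \<noteq> w (hi - 1)"
      proof
        assume eq: "w (hi + 1) = w (hi - 1)"
        then have "W (w (hi + 1)) = kap s t *\<^sub>R W (w (hi + 1))" using st by simp
        then have "(1 - kap s t) *\<^sub>R W (w (hi + 1)) = 0" by (simp add: scaleR_left_diff_distrib)
        then show False using Wp kap_props(1) by simp
      qed
      have "w (i + 2) = w (hi + 1)" using arg_cong[OF True, of w] .
      moreover have "w i = w (hi - 1)" using ieq by simp
      ultimately show ?thesis using neq by simp
    next
      case False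
      then have "i \<in> I" "i + 2 \<in> I" using ii ni by (auto simp: J_def)
      then show ?thesis using nb wI by simp
    qed
  qed
  have ivJ: "int_interval J"
    unfolding int_interval_def
  proof (intro conjI ballI allI impI)
    show "J \<noteq> {}" by (simp add: J_def)
  next
    fix i k j assume ik: "i \<in> J" "k \<in> J" and ijk: "i \<le> j \<and> j \<le> k"
    show "j \<in> J"
    proof (cases "j = hi + 1")
      case True then show ?thesis by (simp add: J_def)
    next
      case False
      have "j \<le> hi" using ijk ik le False by (auto simp: J_def)
      moreover have "i \<in> I" using ik ijk False \<open>j \<le> hi\<close> by (auto simp: J_def)
      ultimately show ?thesis using interval_mid[OF iv \<open>i \<in> I\<close> hi(1), of j] ijk by (simp add: J_def)
    qed
  qed
  have "PL J w" using ivJ PJ nbJ by (auto simp: poly_iff)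
  then show ?thesis using wI unfolding J_def by blast
qed

lemma max_ext:
  assumes M: "MPL I v" and hi: "hi \<in> I" "hi + 1 \<notin> I" and le: "\<forall>i\<in>I. i \<le> hi"
    and cnd: "hi - 1 \<notin> I \<or> W (v hi) \<noteq> 0"
  shows False
proof -
  have PI: "PL I v" using M by (simp add: max_polyline_def)
  obtain w where "PL (insert (hi + 1) I) w" "\<forall>i\<in>I. w i = v i"
    using ext[OF PI hi le cnd] by blast
  moreover have "I \<subset> insert (hi + 1) I" using hi(2) by blast
  ultimately show False using M unfolding max_polyline_def by blast
qed

lemma interval_le: "int_interval I \<Longrightarrow> hi \<in> I \<Longrightarrow> hi + 1 \<notin> I \<Longrightarrow> j \<in> I \<Longrightarrow> j \<le> hi"
proof (rule ccontr)
  assume iv: "int_interval I" and hi: "hi \<in> I" "hi + 1 \<notin> I" and j: "j \<in> I" and nle: "\<not> j \<le> hi"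
  then have "hi + 1 \<le> j" by simp
  then have "hi + 1 \<in> I" using interval_mid[OF iv hi(1) j, of "hi + 1"] by simp
  then show False using hi(2) by simp
qed

lemma poly_rev:
  assumes "PL I v" shows "PL (uminus ` I) (\<lambda>i. v (- i))"
proof -
  obtain s t where P: "prep I v s t" and iv: "int_interval I"
    and nb: "\<forall>i. i \<in> I \<and> i + 2 \<in> I \<longrightarrow> v (i + 2) \<noteq> v i"
    using assms by (auto simp: poly_iff)
  have iv': "int_interval (uminus ` I)"
    unfolding int_interval_def
  proof (intro conjI ballI allI impI)
    show "uminus ` I \<noteq> {}" using iv by (simp add: int_interval_def)
  next
    fix i k j assume "i \<in> uminus ` I" "k \<in> uminus ` I" "i \<le> j \<and> j \<le> k"
    then have "- j \<in> I" using interval_mid[OF iv, of "- k" "- i" "- j"] by (simp add: mem_uminus)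
    then show "j \<in> uminus ` I" by (simp add: mem_uminus)
  qed
  have P': "prep (uminus ` I) (\<lambda>i. v (- i)) (s + 1) t"
    unfolding prep_def
  proof (intro conjI allI ballI impI)
    fix i assume "i \<in> uminus ` I"
    then have "- i \<in> I" by (simp add: mem_uminus)
    moreover have "\<forall>i\<in>I. v i \<in> (if even (i + t) then {x. a \<bullet> x = b1} else {x. a \<bullet> x = b2})"
      using P unfolding prep_def by blast
    ultimately have "v (- i) \<in> (if even (- i + t) then {x. a \<bullet> x = b1} else {x. a \<bullet> x = b2})"
      by blast
    moreover have "even (- i + t) = even (i + t)" by (cases "even i"; cases "even t") (simp_all add: even_add)
    ultimately show "v (- i) \<in> (if even (i + t) then {x. a \<bullet> x = b1} else {x. a \<bullet> x = b2})" by simp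
  next
    fix i assume "i \<in> uminus ` I \<and> i + 1 \<in> uminus ` I"
    then have j: "- i - 1 \<in> I" "- i - 1 + 1 \<in> I" by (simp_all add: mem_uminus)
    have E: "even (- i - 1 + s) = even (i + (s + 1))" by (cases "even i"; cases "even s") (simp_all add: even_add)
    have S0: "if even (- i - 1 + s) then collinear {c, v (- i - 1), v (- i - 1 + 1)}
             else (\<exists>r. v (- i - 1 + 1) - v (- i - 1) = r *\<^sub>R d)"
      using P j unfolding prep_def by blast
    have m1: "- i - 1 + 1 = - i" by simp
    have m: "- (i + 1) = - i - 1" by simp
    have S: "if even (i + (s + 1)) then collinear {c, v (- i - 1), v (- i)}
             else (\<exists>r. v (- i) - v (- i - 1) = r *\<^sub>R d)"
      using S0 unfolding m1 E .
    show "if even (i + (s + 1)) then collinear {c, v (- i), v (- (i + 1))}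
          else \<exists>r. v (- (i + 1)) - v (- i) = r *\<^sub>R d"
      unfolding m
    proof (cases "even (i + (s + 1))")
      case True
      then have "collinear {c, v (- i - 1), v (- i)}" using S by simp
      moreover have "{c, v (- i - 1), v (- i)} = {c, v (- i), v (- i - 1)}" by blast
      ultimately show "if even (i + (s + 1)) then collinear {c, v (- i), v (- i - 1)}
          else \<exists>r. v (- i - 1) - v (- i) = r *\<^sub>R d" using True by simp
    next
      case False
      then obtain r where r: "v (- i) - v (- i - 1) = r *\<^sub>R d" using S by auto
      have "v (- i - 1) - v (- i) = (- r) *\<^sub>R d" using r
        by (metis minus_diff_eq scaleR_minus_left)
      then have ex: "\<exists>r. v (- i - 1) - v (- i) = r *\<^sub>R d" by blast
      show "if even (i + (s + 1)) then collinear {c, v (- i), v (- i - 1)}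
          else \<exists>r. v (- i - 1) - v (- i) = r *\<^sub>R d" using False ex by simp
    qed
  qed
  have nb': "\<forall>i. i \<in> uminus ` I \<and> i + 2 \<in> uminus ` I \<longrightarrow> v (- (i + 2)) \<noteq> v (- i)"
  proof (intro allI impI)
    fix i assume "i \<in> uminus ` I \<and> i + 2 \<in> uminus ` I"
    then have "- i - 2 \<in> I" "- i - 2 + 2 \<in> I" by (simp_all add: mem_uminus)
    then have "v (- i - 2 + 2) \<noteq> v (- i - 2)" using nb by blast
    then show "v (- (i + 2)) \<noteq> v (- i)" by (simp add: algebra_simps)
  qed
  show ?thesis using iv' P' nb' by (auto simp: poly_iff)
qed

lemma mpoly_rev:
  assumes M: "MPL I v" shows "MPL (uminus ` I) (\<lambda>i. v (- i))"
proof -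
  have PI: "PL I v" using M by (simp add: max_polyline_def)
  have "\<not> (\<exists>J w. PL J w \<and> uminus ` I \<subset> J \<and> (\<forall>i\<in>uminus ` I. w i = v (- i)))"
  proof
    assume "\<exists>J w. PL J w \<and> uminus ` I \<subset> J \<and> (\<forall>i\<in>uminus ` I. w i = v (- i))"
    then obtain J w where J: "PL J w" "uminus ` I \<subset> J" "\<forall>i\<in>uminus ` I. w i = v (- i)" by blast
    have "PL (uminus ` J) (\<lambda>i. w (- i))" by (rule poly_rev[OF J(1)])
    moreover have "I \<subset> uminus ` J"
    proof -
      have "I \<subseteq> uminus ` J" using J(2) by (auto simp: mem_uminus)
      moreover obtain j where "j \<in> J" "j \<notin> uminus ` I" using J(2) by blast
      then have "- j \<in> uminus ` J" "- j \<notin> I" by (simp_all add: mem_uminus)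
      ultimately show ?thesis by blast
    qed
    moreover have "\<forall>i\<in>I. w (- i) = v i" using J(3) by (simp add: mem_uminus)
    ultimately show False using M unfolding max_polyline_def by blast
  qed
  then show ?thesis using poly_rev[OF PI] by (simp add: max_polyline_def)
qed

end



lemma div2_lim: "filterlim (\<lambda>n::nat. n div 2) sequentially sequentially"
  unfolding filterlim_at_top eventually_sequentially
proof
  fix Z :: nat
  show "\<exists>N. \<forall>n\<ge>N. Z \<le> n div 2"
    by (rule exI[of _ "2 * Z"]) (auto intro: order_trans[OF _ div_le_mono[of "2 * Z" _ 2]])
qed

lemma pow_top: assumes "1 < (x::real)" shows "filterlim (\<lambda>k::nat. x ^ k) at_top sequentially"
  unfolding filterlim_at_top eventually_sequentially
proof
  fix Z :: real
  obtain N where N: "Z < x ^ N" using real_arch_pow[OF assms] by blast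
  show "\<exists>N. \<forall>n\<ge>N. Z \<le> x ^ n"
  proof (intro exI[of _ N] allI impI)
    fix n assume "N \<le> n"
    then have "x ^ N \<le> x ^ n" using power_increasing[of N n x] assms by simp
    then show "Z \<le> x ^ n" using N by linarith
  qed
qed

lemma seq_lim:
  fixes f :: "int \<Rightarrow> real"
  assumes pos: "\<And>i. f i > 0" and rec: "\<And>i. f (i + 2) = q * f i" and q: "0 < q" "q < 1"
  shows "(\<lambda>n. f (int n)) \<longlonglongrightarrow> 0" and "filterlim (\<lambda>n. f (- int n)) at_top sequentially"
proof -
  have fw: "f (int (2 * m + r)) = q ^ m * f (int r)" for m r
  proof (induction m)
    case 0 then show ?case by simp
  next
    case (Suc m)
    have e: "int (2 * Suc m + r) = int (2 * m + r) + 2" by simp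
    have "f (int (2 * Suc m + r)) = f (int (2 * m + r) + 2)" by (simp only: e)
    also have "\<dots> = q * f (int (2 * m + r))" by (rule rec)
    also have "\<dots> = q * (q ^ m * f (int r))" by (simp only: Suc.IH)
    also have "\<dots> = q ^ Suc m * f (int r)" by simp
    finally show ?case .
  qed
  have bw: "f (- int (2 * m + r)) * q ^ m = f (- int r)" for m r
  proof (induction m)
    case 0 then show ?case by simp
  next
    case (Suc m)
    have e: "- int (2 * Suc m + r) + 2 = - int (2 * m + r)" by simp
    have B: "q * f (- int (2 * Suc m + r)) = f (- int (2 * m + r))"
      using rec[of "- int (2 * Suc m + r)"] unfolding e by (rule sym)
    have "f (- int (2 * Suc m + r)) * q ^ Suc m = (q * f (- int (2 * Suc m + r))) * q ^ m"
      by (simp only: power_Suc mult_ac)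
    also have "\<dots> = f (- int (2 * m + r)) * q ^ m" by (simp only: B)
    also have "\<dots> = f (- int r)" by (rule Suc.IH)
    finally show ?case .
  qed
  have nd: "2 * (n div 2) + n mod 2 = n" for n :: nat by simp
  have md: "n mod 2 = 0 \<or> n mod 2 = 1" for n :: nat by auto
  define M where "M = max (f 0) (f 1)"
  have le1: "f (int n) \<le> q ^ (n div 2) * M" for n
  proof -
    have "f (int n) = q ^ (n div 2) * f (int (n mod 2))" using fw[of "n div 2" "n mod 2"] unfolding nd .
    moreover have "f (int (n mod 2)) \<le> M"
      using md[of n] by (auto simp: M_def)
    ultimately show ?thesis using q by (simp add: mult_left_mono)
  qed
  have "(\<lambda>n. q ^ (n div 2)) \<longlonglongrightarrow> 0"
    using filterlim_compose[OF LIMSEQ_power_zero[of q] div2_lim] q by simp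
  then have "(\<lambda>n. q ^ (n div 2) * M) \<longlonglongrightarrow> 0" by (rule tendsto_mult_left_zero)
  then show "(\<lambda>n. f (int n)) \<longlonglongrightarrow> 0"
    by (rule Lim_null_comparison[rotated]) (use le1 pos in \<open>auto intro: always_eventually simp: less_imp_le\<close>)
  define m where "m = min (f 0) (f (-1))"
  have m0: "m > 0" using pos by (simp add: m_def)
  have le2: "m * (1 / q) ^ (n div 2) \<le> f (- int n)" for n
  proof -
    have P: "f (- int n) * q ^ (n div 2) = f (- int (n mod 2))"
      using bw[of "n div 2" "n mod 2"] unfolding nd .
    have qn: "q ^ (n div 2) > 0" using q by simp
    have "f (- int n) = f (- int (n mod 2)) / q ^ (n div 2)"
      using P qn q(1) by (simp add: eq_divide_eq)
    then have "f (- int n) = f (- int (n mod 2)) * (1 / q) ^ (n div 2)"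
      by (simp add: power_divide)
    moreover have "m \<le> f (- int (n mod 2))"
      using md[of n] by (auto simp: m_def)
    ultimately show ?thesis using q by (simp add: mult_right_mono)
  qed
  have "filterlim (\<lambda>n. (1 / q) ^ (n div 2)) at_top sequentially"
    using filterlim_compose[OF pow_top div2_lim] q by simp
  then have "filterlim (\<lambda>n. m * (1 / q) ^ (n div 2)) at_top sequentially"
    by (rule filterlim_tendsto_pos_mult_at_top[OF tendsto_const m0])
  then show "filterlim (\<lambda>n. f (- int n)) at_top sequentially"
    by (rule filterlim_at_top_mono) (use le2 in \<open>auto intro: always_eventually\<close>)
qed

context lsetup begin

lemma inf_succ:
  assumes M: "MPL I v" and inf: "infinite I" and i: "i \<in> I" shows "i + 1 \<in> I"
proof (rule ccontr)
  assume ni: "i + 1 \<notin> I"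
  have PI: "PL I v" using M by (simp add: max_polyline_def)
  have iv: "int_interval I" using PI by (simp add: poly_iff)
  have le: "\<forall>j\<in>I. j \<le> i" using interval_le[OF iv i ni] by blast
  obtain j where j: "j \<in> I" "j \<le> i - 2"
  proof -
    have "\<not> I \<subseteq> {i - 1..i}" using inf finite_subset by blast
    then show ?thesis using that le by force
  qed
  have "i - 2 \<in> I" using interval_mid[OF iv j(1) i, of "i - 2"] j by simp
  then have "W (v i) \<noteq> 0" using nonzero[OF PI, of "i - 2"] i by simp
  then show False using max_ext[OF M i ni le] by simp
qed

lemma inf_univ:
  assumes M: "MPL I v" and inf: "infinite I" shows "I = UNIV"
proof -
  have up: "\<And>i. i \<in> I \<Longrightarrow> i + 1 \<in> I" using inf_succ[OF M inf] by blast
  have inf': "infinite (uminus ` I)"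
  proof
    assume "finite (uminus ` I)"
    moreover have "inj_on uminus I" by (simp add: inj_on_def)
    ultimately show False using inf finite_imageD by blast
  qed
  have down: "\<And>i. i \<in> I \<Longrightarrow> i - 1 \<in> I"
  proof -
    fix i assume "i \<in> I"
    then have "- i \<in> uminus ` I" by (simp add: mem_uminus)
    then have "- i + 1 \<in> uminus ` I" using inf_succ[OF mpoly_rev[OF M] inf'] by blast
    then show "i - 1 \<in> I" by (simp add: mem_uminus)
  qed
  obtain i0 where i0: "i0 \<in> I" using M by (auto simp: max_polyline_def poly_iff int_interval_def)
  have "j \<in> I" for j
    by (induction j rule: int_induct[of _ i0]) (use i0 up down in auto)
  then show ?thesis by blast
qed

lemma fin_case:
  assumes M: "MPL I v" and fin: "finite I"
  shows "card I = 2 \<and> v ` I = {c + A1 *\<^sub>R d, c + A2 *\<^sub>R d}"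
proof -
  have PI: "PL I v" using M by (simp add: max_polyline_def)
  obtain s t where P: "prep I v s t" and iv: "int_interval I"
    using PI by (auto simp: poly_iff)
  have ne: "I \<noteq> {}" using iv by (simp add: int_interval_def)
  define hi where "hi = Max I"
  have hi: "hi \<in> I" using fin ne by (simp add: hi_def)
  have le: "\<forall>j\<in>I. j \<le> hi" using fin by (simp add: hi_def)
  have ni: "hi + 1 \<notin> I" using le by force
  have h1: "hi - 1 \<in> I" using max_ext[OF M hi ni le] by blast
  have h2: "hi - 2 \<notin> I"
  proof
    assume "hi - 2 \<in> I"
    then have "W (v hi) \<noteq> 0" using nonzero[OF PI, of "hi - 2"] hi by simp
    then show False using max_ext[OF M hi ni le] by simp
  qed
  have Ieq: "I = {hi - 1, hi}"
  proof
    show "I \<subseteq> {hi - 1, hi}"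
    proof
      fix j assume j: "j \<in> I"
      have "\<not> j \<le> hi - 2" using interval_mid[OF iv j hi, of "hi - 2"] h2 by auto
      then show "j \<in> {hi - 1, hi}" using le j by force
    qed
  qed (use hi h1 in auto)
  have W1: "W (v hi) = 0" using max_ext[OF M hi ni le] by blast
  have h1': "hi - 1 + 1 \<in> I" using hi by simp
  have W0: "W (v (hi - 1)) = 0" using adj[OF P h1 h1'] W1 by auto
  have v1: "v hi = c + Al (hi + t) *\<^sub>R d" using decomp[of "v hi"] W1 prep_alpha[OF P hi] by simp
  have v0: "v (hi - 1) = c + Al (hi - 1 + t) *\<^sub>R d"
    using decomp[of "v (hi - 1)"] W0 prep_alpha[OF P h1] by simp
  have "{Al (hi - 1 + t), Al (hi - 1 + t + 1)} = {A1, A2}" by (rule Al_pair)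
  then have "{Al (hi - 1 + t), Al (hi + t)} = {A1, A2}" by (simp add: algebra_simps)
  then have "v ` I = {c + A1 *\<^sub>R d, c + A2 *\<^sub>R d}" unfolding Ieq using v0 v1 by auto
  moreover have "card I = 2" unfolding Ieq by simp
  ultimately show ?thesis by simp
qed

lemma col_line: "collinear {c + r1 *\<^sub>R d, c + r2 *\<^sub>R d, c + r3 *\<^sub>R d}"
  unfolding collinear_alt by (rule exI[of _ c], rule exI[of _ d]) auto

lemma exist_case:
  "MPL {0, 1} (\<lambda>i. if i = 0 then c + A1 *\<^sub>R d else c + A2 *\<^sub>R d)"
  (is "MPL ?I ?v")
proof -
  have a1: "alpha (c + A1 *\<^sub>R d) = A1" and a2: "alpha (c + A2 *\<^sub>R d) = A2"
    using alpha_shift[of c] alpha_c by simp_all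
  have m1: "c + A1 *\<^sub>R d \<in> {x. a \<bullet> x = b1}" using mem_G[of _ 0] a1 by (simp add: G_def Al_def)
  have m2: "c + A2 *\<^sub>R d \<in> {x. a \<bullet> x = b2}" using mem_G[of _ 1] a2 by (simp add: G_def Al_def)
  have cl: "collinear {c, c + A1 *\<^sub>R d, c + A2 *\<^sub>R d}" using col_line[of 0 A1 A2] by simp
  have P: "prep ?I ?v 0 0" unfolding prep_def
  proof (intro conjI ballI allI impI)
    fix i :: int assume "i \<in> ?I" then show "?v i \<in> (if even (i + 0) then {x. a \<bullet> x = b1} else {x. a \<bullet> x = b2})"
      using m1 m2 by auto
  next
    fix i :: int assume "i \<in> ?I \<and> i + 1 \<in> ?I"
    then have "i = 0" by auto
    then show "if even (i + 0) then collinear {c, ?v i, ?v (i + 1)} else \<exists>r. ?v (i + 1) - ?v i = r *\<^sub>R d"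
      using cl by simp
  qed
  have iv: "int_interval ?I" by (auto simp: int_interval_def)
  have PI: "PL ?I ?v" using P iv by (auto simp: poly_iff)
  have "\<not> (\<exists>J w. PL J w \<and> ?I \<subset> J \<and> (\<forall>i\<in>?I. w i = ?v i))"
  proof
    assume "\<exists>J w. PL J w \<and> ?I \<subset> J \<and> (\<forall>i\<in>?I. w i = ?v i)"
    then obtain J w where J: "PL J w" "?I \<subset> J" "\<forall>i\<in>?I. w i = ?v i" by blast
    obtain s t where PJ: "prep J w s t" and ivJ: "int_interval J" using J(1) by (auto simp: poly_iff)
    obtain j where j: "j \<in> J" "j \<notin> ?I" using J(2) by blast
    have w0: "W (w 0) = 0" and w1: "W (w 1) = 0" using J(3) W_line by auto
    have J0: "0 \<in> J" "1 \<in> J" using J(2) by auto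
    show False
    proof (cases "j \<ge> 2")
      case True
      then have "2 \<in> J" using interval_mid[OF ivJ J0(1) j(1), of 2] by simp
      then have "W (w 0) \<noteq> 0" using nonzero[OF J(1), of 0] J0 by simp
      then have "W (w (0 + 1)) \<noteq> 0" using adj[OF PJ, of 0] J0 by simp
      then show False using w1 by simp
    next
      case False
      then have "j \<le> -1" using j(2) by auto
      then have m: "-1 \<in> J" using interval_mid[OF ivJ j(1) J0(2), of "-1"] by simp
      then have "W (w (-1)) \<noteq> 0" using nonzero[OF J(1), of "-1"] J0 by simp
      then have "W (w (-1 + 1)) \<noteq> 0" using adj[OF PJ, of "-1"] J0 m by simp
      then show False using w0 by simp
    qed
  qed
  then show ?thesis using PI by (simp add: max_polyline_def)
qed

lemma line_int1: "{x. a \<bullet> x = b1} \<inter> {c + t *\<^sub>R d |t. True} = {c + A1 *\<^sub>R d}"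
proof -
  have "x \<in> {x. a \<bullet> x = b1} \<longleftrightarrow> alpha x = A1" for x using mem_G[of x 0] by (simp add: G_def Al_def)
  then show ?thesis using alpha_shift[of c] alpha_c by auto
qed

lemma line_int2: "{x. a \<bullet> x = b2} \<inter> {c + t *\<^sub>R d |t. True} = {c + A2 *\<^sub>R d}"
proof -
  have "x \<in> {x. a \<bullet> x = b2} \<longleftrightarrow> alpha x = A2" for x using mem_G[of x 1] by (simp add: G_def Al_def)
  then show ?thesis using alpha_shift[of c] alpha_c by auto
qed

lemma infdist_W: "infdist x {c + t *\<^sub>R d |t. True} \<le> norm (W x)"
proof -
  have "c + alpha x *\<^sub>R d \<in> {c + t *\<^sub>R d |t. True}" by blast
  then have "infdist x {c + t *\<^sub>R d |t. True} \<le> dist x (c + alpha x *\<^sub>R d)" by (rule infdist_le)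
  also have "\<dots> = norm (W x)" by (simp add: W_def dist_norm algebra_simps)
  finally show ?thesis .
qed

lemma norm_W_le:
  assumes "alpha x = A1 \<or> alpha x = A2"
  shows "norm (W x) - (norm c + (\<bar>A1\<bar> + \<bar>A2\<bar>) * norm d) \<le> norm x"
proof -
  have "norm (W x) \<le> norm (x - c) + norm (alpha x *\<^sub>R d)" unfolding W_def by (rule norm_triangle_ineq4)
  moreover have "norm (x - c) \<le> norm x + norm c" by (rule norm_triangle_ineq4)
  moreover have "norm (alpha x *\<^sub>R d) \<le> (\<bar>A1\<bar> + \<bar>A2\<bar>) * norm d"
    using assms by (auto intro!: mult_right_mono)
  ultimately show ?thesis by simp
qed

lemma inf_case:
  assumes M: "MPL I v" and inf: "infinite I"
  shows "I = UNIV \<and>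
              \<not> (\<exists>p>0. \<forall>i. v (i + p) = v i) \<and>
              (((\<lambda>n. infdist (v (int n)) {c + t *\<^sub>R d |t. True}) \<longlonglongrightarrow> 0 \<and>
                filterlim (\<lambda>n. norm (v (- int n))) at_top sequentially) \<or>
               ((\<lambda>n. infdist (v (- int n)) {c + t *\<^sub>R d |t. True}) \<longlonglongrightarrow> 0 \<and>
                filterlim (\<lambda>n. norm (v (int n))) at_top sequentially))"
proof -
  have U: "I = UNIV" by (rule inf_univ[OF M inf])
  have PI: "PL UNIV v" using M U by (simp add: max_polyline_def)
  obtain s t where P: "prep UNIV v s t" using PI by (auto simp: poly_iff)
  define q where "q = \<bar>kap s t\<bar>"
  define f where "f i = norm (W (v i))" for i
  have pos: "f i > 0" for i using nonzero[OF PI, of i] by (simp add: f_def)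
  have rec: "f (i + 2) = q * f i" for i using step[OF P, of i] by (simp add: f_def q_def)
  have q0: "q > 0" "q \<noteq> 1" using kap_props by (auto simp: q_def)
  have nper: "\<not> (\<exists>p>0. \<forall>i. v (i + p) = v i)"
  proof
    assume "\<exists>p>0. \<forall>i. v (i + p) = v i"
    then obtain p where p: "p > 0" "\<forall>i. v (i + p) = v i" by blast
    have fw: "f (2 * int m) = q ^ m * f 0" for m
    proof (induction m)
      case 0 then show ?case by simp
    next
      case (Suc m)
      have e: "2 * int (Suc m) = 2 * int m + 2" by simp
      have "f (2 * int (Suc m)) = f (2 * int m + 2)" by (simp only: e)
      also have "\<dots> = q * f (2 * int m)" by (rule rec)
      also have "\<dots> = q * (q ^ m * f 0)" by (simp only: Suc.IH)
      also have "\<dots> = q ^ Suc m * f 0" by simp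
      finally show ?case .
    qed
    define n where "n = nat p"
    have n: "p = int n" "n > 0" using p(1) by (simp_all add: n_def)
    have vpp: "v (p + p) = v p" using p(2) by blast
    have vp: "v (0 + p) = v 0" using p(2) by blast
    have e2: "2 * p = p + p" by simp
    have "v (2 * p) = v 0" unfolding e2 vpp using vp by simp
    then have "v (2 * int n) = v 0" unfolding n(1) .
    then have "f (2 * int n) = f 0" by (simp add: f_def)
    then have "q ^ n * f 0 = f 0" using fw[of n] by simp
    then have "q ^ n = 1" using pos[of 0] by simp
    show False
    proof (cases "q < 1")
      case True
      then have "q ^ n < 1" using power_less_one_iff[of q n] q0 n by simp
      then show False using \<open>q ^ n = 1\<close> by simp
    next
      case False
      then have "1 < q" using q0 by simp
      then have "1 < q ^ n" using n by simp
      then show False using \<open>q ^ n = 1\<close> by simp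
    qed
  qed
  have bnd: "alpha (v i) = A1 \<or> alpha (v i) = A2" for i using prep_alpha[OF P] Al_cases by simp
  define K where "K = norm c + (\<bar>A1\<bar> + \<bar>A2\<bar>) * norm d"
  have nb: "f i - K \<le> norm (v i)" for i using norm_W_le[OF bnd] by (simp add: f_def K_def)
  have idl: "norm (infdist (v i) {c + t *\<^sub>R d |t. True}) \<le> f i" for i
    using infdist_W[of "v i"] infdist_nonneg[of "v i" "{c + t *\<^sub>R d |t. True}"] by (simp add: f_def)
  have top: "filterlim (\<lambda>n. norm (v (g n))) at_top sequentially"
    if "filterlim (\<lambda>n. f (g n)) at_top sequentially" for g :: "nat \<Rightarrow> int"
  proof -
    have "filterlim (\<lambda>n. - K + f (g n)) at_top sequentially"
      by (rule filterlim_tendsto_add_at_top[OF tendsto_const that])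
    moreover have "eventually (\<lambda>n. - K + f (g n) \<le> norm (v (g n))) sequentially"
    proof (rule always_eventually, rule allI)
      fix n show "- K + f (g n) \<le> norm (v (g n))" using nb[of "g n"] by simp
    qed
    ultimately show ?thesis by (rule filterlim_at_top_mono)
  qed
  have zero: "(\<lambda>n. infdist (v (g n)) {c + t *\<^sub>R d |t. True}) \<longlonglongrightarrow> 0"
    if "(\<lambda>n. f (g n)) \<longlonglongrightarrow> 0" for g :: "nat \<Rightarrow> int"
  proof (rule Lim_null_comparison[OF _ that])
    show "eventually (\<lambda>n. norm (infdist (v (g n)) {c + t *\<^sub>R d |t. True}) \<le> f (g n)) sequentially"
    proof (rule always_eventually, rule allI)
      fix n show "norm (infdist (v (g n)) {c + t *\<^sub>R d |t. True}) \<le> f (g n)" by (rule idl)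
    qed
  qed
  show ?thesis
  proof (cases "q < 1")
    case True
    note L = seq_lim[of f q, OF pos rec q0(1) True]
    show ?thesis using zero[OF L(1)] top[OF L(2)] U nper by blast
  next
    case False
    then have q1: "q > 1" using q0 by simp
    define g where "g i = f (- i)" for i
    have gp: "g i > 0" for i using pos by (simp add: g_def)
    have gr: "g (i + 2) = (1 / q) * g i" for i
    proof -
      have e: "- (i + 2) + 2 = - i" by simp
      have "f (- i) = q * f (- (i + 2))" using rec[of "- (i + 2)"] unfolding e .
      then show ?thesis using q1 by (simp add: g_def)
    qed
    note L = seq_lim[of g "1 / q", OF gp gr] 
    have gq: "0 < 1 / q" "1 / q < 1" using q1 by simp_all
    have L1: "(\<lambda>n. f (- int n)) \<longlonglongrightarrow> 0" using L(1)[OF gq] by (simp add: g_def)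
    have L2: "filterlim (\<lambda>n. f (int n)) at_top sequentially" using L(2)[OF gq] by (simp add: g_def)
    show ?thesis using zero[OF L1] top[OF L2] U nper by simp
  qed
qed

end



theorem lemma3p14:
  fixes a c d :: "real^2" and b1 b2 :: real
  defines "g1 \<equiv> {x. a \<bullet> x = b1}"
      and "g2 \<equiv> {x. a \<bullet> x = b2}"
      and "L \<equiv> {c + t *\<^sub>R d | t. True}"
  assumes "a \<noteq> 0" and "b1 \<noteq> b2" and "d \<noteq> 0" and "a \<bullet> d \<noteq> 0"
      and "c \<notin> g1" and "c \<notin> g2"
      and "infdist c g1 \<noteq> infdist c g2"
  shows "(\<exists>I v. max_polyline g1 g2 c d I v \<and> finite I)
       \<and> (\<forall>I v. max_polyline g1 g2 c d I v \<and> finite I \<longrightarrow>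
              card I = 2 \<and> v ` I = (g1 \<inter> L) \<union> (g2 \<inter> L))
       \<and> (\<forall>I v. max_polyline g1 g2 c d I v \<and> infinite I \<longrightarrow>
              I = UNIV \<and>
              \<not> (\<exists>p>0. \<forall>i. v (i + p) = v i) \<and>
              (((\<lambda>n. infdist (v (int n)) L) \<longlonglongrightarrow> 0 \<and>
                filterlim (\<lambda>n. norm (v (- int n))) at_top sequentially) \<or>
               ((\<lambda>n. infdist (v (- int n)) L) \<longlonglongrightarrow> 0 \<and>
                filterlim (\<lambda>n. norm (v (int n))) at_top sequentially)))"
proof -
  have c1: "a \<bullet> c \<noteq> b1" using assms(8) by (simp add: g1_def)
  have c2: "a \<bullet> c \<noteq> b2" using assms(9) by (simp add: g2_def)
  have absne: "\<bar>b1 - a \<bullet> c\<bar> \<noteq> \<bar>b2 - a \<bullet> c\<bar>"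
  proof
    assume "\<bar>b1 - a \<bullet> c\<bar> = \<bar>b2 - a \<bullet> c\<bar>"
    then have "\<bar>a \<bullet> c - b1\<bar> = \<bar>a \<bullet> c - b2\<bar>" by (simp add: abs_minus_commute)
    then have "infdist c g1 = infdist c g2"
      unfolding g1_def g2_def using infdist_hyper[OF assms(4)] by simp
    then show False using assms(10) by simp
  qed
  interpret lsetup a c d b1 b2
    by unfold_locales (use assms(5,7) c1 c2 absne in auto)
  have P1: "\<exists>I v. MPL I v \<and> finite I" using exist_case by blast
  have P2: "\<forall>I v. MPL I v \<and> finite I \<longrightarrow>
              card I = 2 \<and> v ` I = (g1 \<inter> L) \<union> (g2 \<inter> L)"
    using fin_case unfolding g1_def g2_def L_def line_int1 line_int2 by auto
  show ?thesis using P1 P2 inf_case unfolding g1_def g2_def L_def by blast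
qed


end
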